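(* Let $G=(V,E)$ be a locally finite connected simple undirected graph with a distinguished root vertex $e\in V$, and let $k\ge 1$ be an integer such that $\sigma:=|V_e^{[k]}|\ge 1$, where $V_e^{[k]}=\{x\in V:\partial_G(x,e)=k\}$ is the set of neighbours of $e$ in the distance $k$-graph $G^{[k]}$. For $N\ge 1$ let $G^{\star N}$ be the $N$-fold star power of $G$ (rooted at $e$), let $G^{[\star N,k]}$ be the distance $k$-graph of $G^{\star N}$, and let $A^{[\star N,k]}$ be its adjacency matrix. Then, as $N\to\infty$, the distribution of $(N\sigma)^{-1/2}A^{[\star N,k]}$ with respect to the vacuum state at $e$ converges weakly to the centered Bernoulli distribution $\frac12\delta_{-1}+\frac12\delta_{1}$.
   Context: All graphs are simple (no loops) and undirected; $\partial_H(x,y)$ denotes the graph distance in a graph $H$. For a graph $H=(W,F)$ and $k\ge1$, the distance $k$-graph $H^{[k]}$ is the graph on $W$ whose edges are the pairs $(x,y)$ with $\partial_H(x,y)=k$. For rooted graphs $(G_1,o_1)$, $(G_2,o_2)$ the star product $G_1\star G_2$ has vertex set $V_1\times V_2$, with $(v_1,w_1)\sim(v_2,w_2)$ iff either $v_1=v_2=o_1$ and $w_1\sim w_2$ in $G_2$, or $v_1\sim v_2$ in $G_1$ and $w_1=w_2=o_2$; it is rooted at $(o_1,o_2)$. Equivalently, (the connected component of the root of) the $N$-fold star power $G^{\star N}=G\star\cdots\star G$ is the graph obtained by taking $N$ disjoint copies of $G$ and identifying their roots into a single vertex, again denoted $e$. The distribution of a (symmetric) adjacency matrix $A$ with respect to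 the vacuum state at the vertex $e$ is the probability measure $\mu$ on $\mathbb{R}$ with $\int x^m\,\mu(dx)=(A^m)_{ee}$ for all $m\ge0$, i.e. the $m$-th moment is the number of walks of length $m$ starting and ending at $e$. *)

theory Defs
  imports "HOL-Probability.Probability"
begin

definition is_walk :: "'v set \<Rightarrow> ('v \<Rightarrow> 'v \<Rightarrow> bool) \<Rightarrow> 'v list \<Rightarrow> bool" where
  "is_walk V E xs \<longleftrightarrow> xs \<noteq> [] \<and> set xs \<subseteq> V \<and>
     (\<forall>i. Suc i < length xs \<longrightarrow> E (xs ! i) (xs ! Suc i))"

text \<open>Graph distance (number of edges of a shortest walk); meaningful for connected graphs.\<close>
definition gdist :: "'v set \<Rightarrow> ('v \<Rightarrow> 'v \<Rightarrow> bool) \<Rightarrow> 'v \<Rightarrow> 'v \<Rightarrow> nat" where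
  "gdist V E x y = (LEAST n. \<exists>xs. is_walk V E xs \<and> hd xs = x \<and> last xs = y \<and> length xs = Suc n)"

definition dist_kgraph :: "'v set \<Rightarrow> ('v \<Rightarrow> 'v \<Rightarrow> bool) \<Rightarrow> nat \<Rightarrow> 'v \<Rightarrow> 'v \<Rightarrow> bool" where
  "dist_kgraph V E k x y \<longleftrightarrow> x \<in> V \<and> y \<in> V \<and> gdist V E x y = k"

text \<open>(A^m)_{xx}: number of closed walks of length m at x.\<close>
definition closed_walks :: "'v set \<Rightarrow> ('v \<Rightarrow> 'v \<Rightarrow> bool) \<Rightarrow> 'v \<Rightarrow> nat \<Rightarrow> nat" where
  "closed_walks V E x m = card {xs. is_walk V E xs \<and> length xs = Suc m \<and> hd xs = x \<and> last xs = x}"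

text \<open>N-fold star power of the graph (UNIV, E) rooted at e: N copies of the graph,
vertex v of copy i is (i, v), and all roots (i, e) are identified with (0, e).\<close>
definition star_emb :: "'a \<Rightarrow> nat \<Rightarrow> 'a \<Rightarrow> nat \<times> 'a" where
  "star_emb e i v = (if v = e then (0, e) else (i, v))"

definition star_vertices :: "nat \<Rightarrow> 'a \<Rightarrow> (nat \<times> 'a) set" where
  "star_vertices N e = {star_emb e i v | i v. i < N}"

definition star_adj :: "nat \<Rightarrow> ('a \<Rightarrow> 'a \<Rightarrow> bool) \<Rightarrow> 'a \<Rightarrow> nat \<times> 'a \<Rightarrow> nat \<times> 'a \<Rightarrow> bool" where
  "star_adj N E e x y \<longleftrightarrow> (\<exists>i v w. i < N \<and> E v w \<and> x = star_emb e i v \<and> y = star_emb e i w)"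

definition centered_bernoulli :: "real measure" where
  "centered_bernoulli = distr (measure_pmf (pmf_of_set {-1, 1})) borel (\<lambda>x. x)"

end

theory Submission
  imports Defs
begin


lemma is_walk_Nil[simp]: "\<not> is_walk V E []" by (simp add: is_walk_def)
lemma is_walk_single[simp]: "is_walk V E [x] \<longleftrightarrow> x \<in> V" by (simp add: is_walk_def)
lemma is_walk_Cons2[simp]: "is_walk V E (x # y # zs) \<longleftrightarrow> x \<in> V \<and> E x y \<and> is_walk V E (y # zs)"
proof
  assume H: "is_walk V E (x # y # zs)"
  have "\<forall>i. Suc i < length (y#zs) \<longrightarrow> E ((y#zs) ! i) ((y#zs) ! Suc i)"
  proof (intro allI impI)
    fix i assume "Suc i < length (y#zs)"
    then have "Suc (Suc i) < length (x#y#zs)" by simp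
    with H have "E ((x#y#zs) ! Suc i) ((x#y#zs) ! Suc (Suc i))" unfolding is_walk_def by blast
    then show "E ((y#zs) ! i) ((y#zs) ! Suc i)" by simp
  qed
  moreover have "E x y" using H unfolding is_walk_def by (metis One_nat_def length_Cons less_Suc_eq_0_disj nth_Cons_0 nth_Cons_Suc zero_less_Suc)
  ultimately show "x \<in> V \<and> E x y \<and> is_walk V E (y # zs)" using H unfolding is_walk_def by auto
next
  assume H: "x \<in> V \<and> E x y \<and> is_walk V E (y # zs)"
  show "is_walk V E (x # y # zs)" unfolding is_walk_def
  proof (intro conjI allI impI)
    fix i assume "Suc i < length (x#y#zs)"
    then show "E ((x#y#zs) ! i) ((x#y#zs) ! Suc i)"
      using H unfolding is_walk_def by (cases i) auto
  qed (use H in \<open>auto simp: is_walk_def\<close>)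
qed

lemma is_walk_hd_in: "is_walk V E xs \<Longrightarrow> hd xs \<in> V"
  by (cases xs) (auto simp: is_walk_def)

lemma walk_join: "is_walk V E xs \<Longrightarrow> is_walk V E ys \<Longrightarrow> last xs = hd ys \<Longrightarrow> is_walk V E (xs @ tl ys)"
proof (induction xs)
  case Nil then show ?case by simp
next
  case (Cons x xs)
  show ?case
  proof (cases xs)
    case Nil
    then show ?thesis using Cons.prems by (cases ys) auto
  next
    case (Cons y zs)
    with Cons.prems Cons.IH show ?thesis by simp
  qed
qed

lemma walk_join_len: "ys \<noteq> [] \<Longrightarrow> length (xs @ tl ys) = length xs + length ys - 1"
  by (cases ys) auto

lemma walk_join_hd: "xs \<noteq> [] \<Longrightarrow> hd (xs @ tl ys) = hd xs" by simp
lemma walk_join_last: "ys \<noteq> [] \<Longrightarrow> last xs = hd ys \<Longrightarrow> xs \<noteq> [] \<Longrightarrow> last (xs @ tl ys) = last ys"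
  by (cases ys) auto

lemma walk_rev:
  assumes sym: "\<And>x y. E x y \<Longrightarrow> E y x"
  shows "is_walk V E xs \<Longrightarrow> is_walk V E (rev xs)"
proof (induction xs)
  case Nil then show ?case by simp
next
  case (Cons x xs)
  show ?case
  proof (cases xs)
    case Nil then show ?thesis using Cons by simp
  next
    case (Cons y zs)
    have w: "is_walk V E (rev xs)" using Cons.IH Cons.prems \<open>xs = y # zs\<close> by simp
    have "is_walk V E [y, x]" using Cons.prems \<open>xs = y # zs\<close> sym is_walk_hd_in[of V E xs] by auto
    then have "is_walk V E (rev xs @ tl [y, x])"
      by (rule walk_join[OF w]) (simp add: \<open>xs = y # zs\<close>)
    then show ?thesis by simp
  qed
qed

lemma walk_take: "is_walk V E xs \<Longrightarrow> 0 < j \<Longrightarrow> is_walk V E (take j xs)"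
  unfolding is_walk_def
proof (intro conjI allI impI)
  assume H: "xs \<noteq> [] \<and> set xs \<subseteq> V \<and> (\<forall>i. Suc i < length xs \<longrightarrow> E (xs ! i) (xs ! Suc i))" "0 < j"
  then show "take j xs \<noteq> []" by simp
  show "set (take j xs) \<subseteq> V" using H set_take_subset[of j xs] by blast
  fix i assume "Suc i < length (take j xs)"
  then show "E (take j xs ! i) (take j xs ! Suc i)" using H by simp
qed

lemma walk_drop: "is_walk V E xs \<Longrightarrow> j < length xs \<Longrightarrow> is_walk V E (drop j xs)"
  unfolding is_walk_def
proof (intro conjI allI impI)
  assume H: "xs \<noteq> [] \<and> set xs \<subseteq> V \<and> (\<forall>i. Suc i < length xs \<longrightarrow> E (xs ! i) (xs ! Suc i))" "j < length xs"
  then show "drop j xs \<noteq> []" by simp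
  show "set (drop j xs) \<subseteq> V" using H set_drop_subset[of j xs] by blast
  fix i assume "Suc i < length (drop j xs)"
  then show "E (drop j xs ! i) (drop j xs ! Suc i)" using H by (simp add: add.commute)
qed

lemma gdist_le:
  assumes "is_walk V E xs" "hd xs = x" "last xs = y"
  shows "gdist V E x y \<le> length xs - 1"
proof -
  have "xs \<noteq> []" using assms by auto
  then have "length xs = Suc (length xs - 1)" by simp
  then show ?thesis unfolding gdist_def using assms by (intro Least_le) blast
qed

lemma gdist_ex:
  assumes "is_walk V E xs" "hd xs = x" "last xs = y"
  shows "\<exists>ys. is_walk V E ys \<and> hd ys = x \<and> last ys = y \<and> length ys = Suc (gdist V E x y)"
proof -
  have "xs \<noteq> []" using assms by auto
  then have "length xs = Suc (length xs - 1)" by simp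
  then have "\<exists>n. \<exists>xs. is_walk V E xs \<and> hd xs = x \<and> last xs = y \<and> length xs = Suc n" using assms by blast
  from LeastI_ex[OF this] show ?thesis unfolding gdist_def .
qed

lemma gdist_sym:
  assumes sym: "\<And>x y. E x y \<Longrightarrow> E y x"
  shows "gdist V E x y = gdist V E y x"
proof -
  have *: "(\<exists>xs. is_walk V E xs \<and> hd xs = a \<and> last xs = b \<and> length xs = Suc n) \<Longrightarrow>
        (\<exists>xs. is_walk V E xs \<and> hd xs = b \<and> last xs = a \<and> length xs = Suc n)" for a b n
  proof -
    assume "\<exists>xs. is_walk V E xs \<and> hd xs = a \<and> last xs = b \<and> length xs = Suc n"
    then obtain xs where xs: "is_walk V E xs" "hd xs = a" "last xs = b" "length xs = Suc n" by blast
    then have "xs \<noteq> []" by auto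
    then show ?thesis using xs walk_rev[OF sym, where V=V and xs=xs]
      by (intro exI[of _ "rev xs"]) (auto simp: hd_rev last_rev)
  qed
  have "(\<lambda>n. \<exists>xs. is_walk V E xs \<and> hd xs = x \<and> last xs = y \<and> length xs = Suc n) =
        (\<lambda>n. \<exists>xs. is_walk V E xs \<and> hd xs = y \<and> last xs = x \<and> length xs = Suc n)"
    by (intro ext iffI) (erule *)+
  then show ?thesis unfolding gdist_def by simp
qed

lemma gdist_tri:
  assumes "is_walk V E xs" "hd xs = x" "last xs = y"
    and "is_walk V E ys" "hd ys = y" "last ys = z"
  shows "gdist V E x z \<le> gdist V E x y + gdist V E y z"
proof -
  obtain p where p: "is_walk V E p" "hd p = x" "last p = y" "length p = Suc (gdist V E x y)"
    using gdist_ex[OF assms(1-3)] by blast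
  obtain q where q: "is_walk V E q" "hd q = y" "last q = z" "length q = Suc (gdist V E y z)"
    using gdist_ex[OF assms(4-6)] by blast
  have "p \<noteq> []" "q \<noteq> []" using p q by auto
  have "gdist V E x z \<le> length (p @ tl q) - 1"
    using walk_join[OF p(1) q(1)] p q \<open>p \<noteq> []\<close> \<open>q \<noteq> []\<close>
    by (intro gdist_le) (auto simp: walk_join_last)
  then show ?thesis using p q walk_join_len[OF \<open>q \<noteq> []\<close>, of p] by simp
qed

lemma gdist_0:
  assumes "is_walk V E xs" "hd xs = x" "last xs = y" "gdist V E x y = 0"
  shows "x = y"
proof -
  obtain p where p: "is_walk V E p" "hd p = x" "last p = y" "length p = Suc 0"
    using gdist_ex[OF assms(1-3)] assms(4) by auto
  then obtain a where "p = [a]" by (cases p) auto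
  then show ?thesis using p by simp
qed

lemma gdist_refl: "x \<in> V \<Longrightarrow> gdist V E x x = 0"
  using gdist_le[of V E "[x]" x x] by simp



lemma conn_walk: "E\<^sup>*\<^sup>* x y \<Longrightarrow> \<exists>xs. is_walk UNIV E xs \<and> hd xs = x \<and> last xs = y"
proof (induction rule: converse_rtranclp_induct)
  case base then show ?case by (intro exI[of _ "[y]"]) simp
next
  case (step a b)
  then obtain xs where xs: "is_walk UNIV E xs" "hd xs = b" "last xs = y" by blast
  then obtain zs where "xs = b # zs" by (cases xs) auto
  then show ?case using xs step(1) by (intro exI[of _ "a # xs"]) auto
qed

lemma last_take_Suc: "t < length p \<Longrightarrow> last (take (Suc t) p) = p ! t"
proof -
  assume "t < length p"
  then have "take (Suc t) p \<noteq> []" "length (take (Suc t) p) = Suc t" by auto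
  then show ?thesis using \<open>t < length p\<close> by (simp add: last_conv_nth)
qed

lemma ball_fin:
  assumes conn: "\<And>x y. E\<^sup>*\<^sup>* x y" and locfin: "\<And>x. finite {y. E x y}"
  shows "finite {w. gdist UNIV E e w \<le> n}"
proof (induction n)
  case 0
  have "{w. gdist UNIV E e w \<le> 0} \<subseteq> {e}"
  proof
    fix w assume "w \<in> {w. gdist UNIV E e w \<le> 0}"
    moreover obtain xs where "is_walk UNIV E xs" "hd xs = e" "last xs = w" using conn_walk[OF conn] by blast
    ultimately show "w \<in> {e}" using gdist_0 by fastforce
  qed
  then show ?case using finite_subset by blast
next
  case (Suc n)
  let ?B = "{w. gdist UNIV E e w \<le> n}"
  have "{w. gdist UNIV E e w \<le> Suc n} \<subseteq> ?B \<union> (\<Union>u\<in>?B. {y. E u y})"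
  proof
    fix w assume w: "w \<in> {w. gdist UNIV E e w \<le> Suc n}"
    show "w \<in> ?B \<union> (\<Union>u\<in>?B. {y. E u y})"
    proof (cases "gdist UNIV E e w \<le> n")
      case True then show ?thesis by simp
    next
      case False
      then have d: "gdist UNIV E e w = Suc n" using w by simp
      obtain xs0 where "is_walk UNIV E xs0" "hd xs0 = e" "last xs0 = w" using conn_walk[OF conn] by blast
      from gdist_ex[OF this] obtain p where p: "is_walk UNIV E p" "hd p = e" "last p = w" "length p = Suc (Suc n)"
        using d by auto
      have "E (p ! n) (p ! Suc n)" using p(1,4) unfolding is_walk_def by simp
      moreover have "p ! Suc n = w" using p by (metis diff_Suc_1 last_conv_nth list.size(3) nat.distinct(1))
      moreover have "gdist UNIV E e (p ! n) \<le> n"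
      proof -
        have "gdist UNIV E e (p ! n) \<le> length (take (Suc n) p) - 1"
          using p by (intro gdist_le walk_take) (auto simp: last_take_Suc)
        then show ?thesis using p by simp
      qed
      ultimately show ?thesis by blast
    qed
  qed
  moreover have "finite (?B \<union> (\<Union>u\<in>?B. {y. E u y}))" using Suc locfin by blast
  ultimately show ?case using finite_subset by blast
qed

context
  fixes E :: "'a \<Rightarrow> 'a \<Rightarrow> bool" and e :: 'a and N :: nat
  assumes N: "N \<ge> 1" and sym: "\<And>x y. E x y \<Longrightarrow> E y x" and conn: "\<And>x y. E\<^sup>*\<^sup>* x y"
begin

abbreviation "SV \<equiv> star_vertices N e"
abbreviation "SA \<equiv> star_adj N E e"

lemma emb_snd[simp]: "snd (star_emb e i v) = v" by (simp add: star_emb_def)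
lemma emb_in: "i < N \<Longrightarrow> star_emb e i v \<in> SV" unfolding star_vertices_def by blast
lemma r_in: "(0, e) \<in> SV" using emb_in[of 0 e] N by (simp add: star_emb_def)
lemma emb_ne: "v \<noteq> e \<Longrightarrow> star_emb e i v = (i, v)" by (simp add: star_emb_def)
lemma emb_e: "star_emb e i e = (0, e)" by (simp add: star_emb_def)

lemma SV_cases: "x \<in> SV \<Longrightarrow> x = (0,e) \<or> (\<exists>i v. x = (i,v) \<and> i < N \<and> v \<noteq> e)"
proof -
  assume "x \<in> SV"
  then obtain i v where "x = star_emb e i v" "i < N" unfolding star_vertices_def by blast
  then show ?thesis by (cases "v = e") (simp_all add: star_emb_def)
qed

lemma SA_snd: "SA x y \<Longrightarrow> E (snd x) (snd y)" unfolding star_adj_def by auto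
lemma SA_fst: "SA x y \<Longrightarrow> x \<noteq> (0,e) \<Longrightarrow> y \<noteq> (0,e) \<Longrightarrow> fst x = fst y"
proof -
  assume "SA x y" "x \<noteq> (0,e)" "y \<noteq> (0,e)"
  then obtain i v w where "x = star_emb e i v" "y = star_emb e i w" unfolding star_adj_def by blast
  with \<open>x \<noteq> (0,e)\<close> \<open>y \<noteq> (0,e)\<close> show ?thesis by (simp add: star_emb_def split: if_splits)
qed

lemma walk_map: "is_walk UNIV E xs \<Longrightarrow> i < N \<Longrightarrow> is_walk SV SA (map (star_emb e i) xs)"
proof -
  assume H: "is_walk UNIV E xs" "i < N"
  show ?thesis unfolding is_walk_def
  proof (intro conjI allI impI)
    show "map (star_emb e i) xs \<noteq> []" using H by (auto simp: is_walk_def)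
    show "set (map (star_emb e i) xs) \<subseteq> SV" using emb_in[OF H(2)] by auto
    fix j assume j: "Suc j < length (map (star_emb e i) xs)"
    then have "E (xs ! j) (xs ! Suc j)" using H(1) by (simp add: is_walk_def)
    then show "SA (map (star_emb e i) xs ! j) (map (star_emb e i) xs ! Suc j)"
      unfolding star_adj_def using j H(2) by (intro exI[of _ i] exI[of _ "xs!j"] exI[of _ "xs ! Suc j"]) simp
  qed
qed

lemma walk_proj: "is_walk SV SA xs \<Longrightarrow> is_walk UNIV E (map snd xs)"
proof -
  assume H: "is_walk SV SA xs"
  show ?thesis unfolding is_walk_def
  proof (intro conjI allI impI)
    show "map snd xs \<noteq> []" using H by (auto simp: is_walk_def)
    fix j assume j: "Suc j < length (map snd xs)"
    then have "SA (xs ! j) (xs ! Suc j)" using H by (simp add: is_walk_def)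
    then show "E (map snd xs ! j) (map snd xs ! Suc j)" using j SA_snd by simp
  qed simp
qed

lemma star_conn: "x \<in> SV \<Longrightarrow> \<exists>xs. is_walk SV SA xs \<and> hd xs = (0,e) \<and> last xs = x"
proof -
  assume "x \<in> SV"
  then obtain i v where x: "x = star_emb e i v" "i < N" by (auto simp: star_vertices_def)
  obtain xs where xs: "is_walk UNIV E xs" "hd xs = e" "last xs = v" using conn_walk[OF conn] by blast
  have "xs \<noteq> []" using xs by auto
  then show ?thesis using xs x walk_map[OF xs(1) x(2)]
    by (intro exI[of _ "map (star_emb e i) xs"]) (auto simp: hd_map last_map emb_e)
qed

lemma star_conn2: "x \<in> SV \<Longrightarrow> y \<in> SV \<Longrightarrow> \<exists>xs. is_walk SV SA xs \<and> hd xs = x \<and> last xs = y"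
proof -
  assume "x \<in> SV" "y \<in> SV"
  obtain p where p: "is_walk SV SA p" "hd p = (0,e)" "last p = x" using star_conn[OF \<open>x \<in> SV\<close>] by blast
  obtain q where q: "is_walk SV SA q" "hd q = (0,e)" "last q = y" using star_conn[OF \<open>y \<in> SV\<close>] by blast
  have SAsym: "SA a b \<Longrightarrow> SA b a" for a b unfolding star_adj_def using sym by blast
  have rp: "is_walk SV SA (rev p)" using walk_rev[of SA, OF SAsym] p(1) by blast
  have ne: "p \<noteq> []" "q \<noteq> []" using p q by auto
  show ?thesis using walk_join[OF rp q(1)] p q ne
    by (intro exI[of _ "rev p @ tl q"]) (auto simp: hd_rev last_rev walk_join_last)
qed

lemma SA_sym: "SA a b \<Longrightarrow> SA b a" unfolding star_adj_def using sym by blast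

lemma dist_root: "i < N \<Longrightarrow> gdist SV SA (0,e) (star_emb e i v) = gdist UNIV E e v"
proof -
  assume i: "i < N"
  obtain xs0 where "is_walk UNIV E xs0" "hd xs0 = e" "last xs0 = v" using conn_walk[OF conn] by blast
  from gdist_ex[OF this] obtain p where p: "is_walk UNIV E p" "hd p = e" "last p = v" "length p = Suc (gdist UNIV E e v)"
    by blast
  have "p \<noteq> []" using p by auto
  have le1: "gdist SV SA (0,e) (star_emb e i v) \<le> gdist UNIV E e v"
    using gdist_le[OF walk_map[OF p(1) i]] p \<open>p \<noteq> []\<close> by (simp add: hd_map last_map emb_e)
  obtain ys0 where "is_walk SV SA ys0" "hd ys0 = (0,e)" "last ys0 = star_emb e i v"
    using star_conn[OF emb_in[OF i]] by blast
  from gdist_ex[OF this] obtain q where q: "is_walk SV SA q" "hd q = (0,e)" "last q = star_emb e i v"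
    "length q = Suc (gdist SV SA (0,e) (star_emb e i v))" by blast
  have "q \<noteq> []" using q by auto
  have le2: "gdist UNIV E e v \<le> gdist SV SA (0,e) (star_emb e i v)"
    using gdist_le[OF walk_proj[OF q(1)]] q \<open>q \<noteq> []\<close> by (simp add: hd_map last_map)
  show ?thesis using le1 le2 by simp
qed

lemma dist_root_pos: "y \<in> SV \<Longrightarrow> y \<noteq> (0,e) \<Longrightarrow> gdist SV SA (0,e) y \<ge> 1"
  using star_conn[of y] gdist_0[of SV SA _ "(0,e)" y] by fastforce

lemma sep:
  assumes x: "x \<in> SV" "x \<noteq> (0,e)" and y: "y \<in> SV" "y \<noteq> (0,e)" and f: "fst x \<noteq> fst y"
  shows "gdist SV SA x (0,e) + gdist SV SA (0,e) y \<le> gdist SV SA x y"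
proof -
  obtain xs0 where "is_walk SV SA xs0" "hd xs0 = x" "last xs0 = y" using star_conn2[OF x(1) y(1)] by blast
  from gdist_ex[OF this] obtain p where p: "is_walk SV SA p" "hd p = x" "last p = y"
    "length p = Suc (gdist SV SA x y)" by blast
  have ne: "p \<noteq> []" using p by auto
  have "\<exists>t < length p. p ! t = (0,e)"
  proof (rule ccontr)
    assume nr: "\<not> ?thesis"
    have "j < length p \<Longrightarrow> fst (p ! j) = fst x" for j
    proof (induction j)
      case 0 then show ?case using p ne by (simp add: hd_conv_nth)
    next
      case (Suc j)
      have "SA (p ! j) (p ! Suc j)" using p(1) Suc.prems unfolding is_walk_def by blast
      then have "fst (p ! j) = fst (p ! Suc j)" using nr Suc.prems by (intro SA_fst) auto
      then show ?case using Suc by simp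
    qed
    from this[of "length p - 1"] have "fst (last p) = fst x" using ne by (simp add: last_conv_nth)
    then show False using p f by simp
  qed
  then obtain t where t: "t < length p" "p ! t = (0,e)" by blast
  have "gdist SV SA x (0,e) \<le> length (take (Suc t) p) - 1"
    using p t ne by (intro gdist_le walk_take) (auto simp: last_take_Suc)
  moreover have "gdist SV SA (0,e) y \<le> length (drop t p) - 1"
    using p t ne by (intro gdist_le walk_drop) (auto simp: hd_drop_conv_nth)
  ultimately show ?thesis using p t by simp
qed

end


lemma len2: "length xs = 2 \<Longrightarrow> \<exists>a b. xs = [a,b]"
  by (auto simp: numeral_eq_Suc length_Suc_conv)
lemma len3: "length xs = 3 \<Longrightarrow> \<exists>a b c. xs = [a,b,c]"
  by (auto simp: numeral_eq_Suc length_Suc_conv)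
lemma len5: "length xs = 5 \<Longrightarrow> \<exists>a b c d f. xs = [a,b,c,d,f]"
  by (auto simp: numeral_eq_Suc length_Suc_conv)

context
  fixes E :: "'a \<Rightarrow> 'a \<Rightarrow> bool" and e :: 'a and N :: nat and k :: nat
  assumes N: "N \<ge> 1" and sym: "\<And>x y. E x y \<Longrightarrow> E y x" and conn: "\<And>x y. E\<^sup>*\<^sup>* x y"
    and k: "k \<ge> 1"
begin

abbreviation "D \<equiv> dist_kgraph (star_vertices N e) (star_adj N E e) k"
abbreviation "SS \<equiv> {v. gdist UNIV E v e = k}"
abbreviation "RR \<equiv> {x \<in> star_vertices N e. gdist (star_vertices N e) (star_adj N E e) (0,e) x = k}"

lemma ee: "gdist UNIV E e e = 0" by (rule gdist_refl) simp

lemma R_eq: "RR = {..<N} \<times> SS"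
proof
  show "RR \<subseteq> {..<N} \<times> SS"
  proof
    fix x assume x: "x \<in> RR"
    have g0: "gdist (star_vertices N e) (star_adj N E e) (0,e) (0,e) = 0"
      by (rule gdist_refl) (rule r_in[where e=e, OF N sym conn])
    have gx: "gdist (star_vertices N e) (star_adj N E e) (0,e) x = k" using x by blast
    have "x \<noteq> (0,e)" using g0 gx k by auto
    then obtain i v where iv: "x = (i,v)" "i < N" "v \<noteq> e" using SV_cases[where e=e, OF N sym conn] x by blast
    have "star_emb e i v = x" using iv by (simp add: star_emb_def)
    then have "gdist UNIV E e v = k" using gx dist_root[where e=e and v=v, OF N sym conn iv(2)] by simp
    then have "gdist UNIV E v e = k" using gdist_sym[where V=UNIV and x=e and y=v, OF sym] by simp
    then show "x \<in> {..<N} \<times> SS" using iv by simp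
  qed
next
  show "{..<N} \<times> SS \<subseteq> RR"
  proof
    fix x assume "x \<in> {..<N} \<times> SS"
    then obtain i v where iv: "x = (i,v)" "i < N" "gdist UNIV E v e = k" by blast
    have "v \<noteq> e" using iv ee k by auto
    have g: "gdist UNIV E e v = k" using iv gdist_sym[where V=UNIV and x=e and y=v, OF sym] by simp
    have xe: "star_emb e i v = x" using iv \<open>v \<noteq> e\<close> by (simp add: star_emb_def)
    have "x \<in> star_vertices N e" using emb_in[where e=e and v=v, OF N sym conn iv(2)] xe by simp
    moreover have "gdist (star_vertices N e) (star_adj N E e) (0,e) x = k"
      using dist_root[where e=e and v=v, OF N sym conn iv(2)] g xe by simp
    ultimately show "x \<in> RR" by blast
  qed
qed

lemma D_r1: "D (0,e) x \<longleftrightarrow> x \<in> RR"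
  unfolding dist_kgraph_def using r_in[where e=e, OF N sym conn] by auto

lemma D_r2: "D x (0,e) \<longleftrightarrow> x \<in> RR"
  unfolding dist_kgraph_def using r_in[where e=e, OF N sym conn]
    gdist_sym[where E="star_adj N E e" and V="star_vertices N e", OF SA_sym[where e=e, OF N sym conn]] by auto

lemma c1: "closed_walks (star_vertices N e) D (0,e) 1 = 0"
proof -
  have emp: "{xs. is_walk (star_vertices N e) D xs \<and> length xs = Suc 1 \<and> hd xs = (0,e) \<and> last xs = (0,e)} = {}"
  proof (rule ccontr)
    assume "\<not> ?thesis"
    then obtain xs where xs: "is_walk (star_vertices N e) D xs" "length xs = 2" "hd xs = (0,e)" "last xs = (0,e)" by auto
    then obtain a b where "xs = [a,b]" using len2 by blast
    then have "D (0,e) (0,e)" using xs by simp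
    then show False using gdist_refl[of "(0,e)" "star_vertices N e" "star_adj N E e"] k
      by (simp add: dist_kgraph_def)
  qed
  show ?thesis unfolding closed_walks_def emp by simp
qed

lemma c2: "closed_walks (star_vertices N e) D (0,e) 2 = card RR"
proof -
  have "{xs. is_walk (star_vertices N e) D xs \<and> length xs = Suc 2 \<and> hd xs = (0,e) \<and> last xs = (0,e)}
      = (\<lambda>x. [(0,e), x, (0,e)]) ` RR" (is "?W = _")
  proof
    show "?W \<subseteq> (\<lambda>x. [(0,e), x, (0,e)]) ` RR"
    proof
      fix xs assume "xs \<in> ?W"
      then have xs: "is_walk (star_vertices N e) D xs" "length xs = 3" "hd xs = (0,e)" "last xs = (0,e)" by auto
      then obtain a b c where abc: "xs = [a,b,c]" using len3 by blast
      then have "D (0,e) b" using xs by simp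
      then show "xs \<in> (\<lambda>x. [(0,e), x, (0,e)]) ` RR" using abc xs D_r1 by auto
    qed
  next
    show "(\<lambda>x. [(0,e), x, (0,e)]) ` RR \<subseteq> ?W"
      using D_r1 D_r2 r_in[where e=e, OF N sym conn] by (auto simp: numeral_eq_Suc)
  qed
  moreover have "inj_on (\<lambda>x. [(0,e), x, (0,e)]) RR" by (auto simp: inj_on_def)
  ultimately show ?thesis unfolding closed_walks_def by (simp add: card_image)
qed

abbreviation "BB \<equiv> {w. gdist UNIV E e w \<le> 2 * k}"

lemma mem4:
  assumes a: "D (0,e) a" and ab: "D a b" and bc: "D b c" and c: "D c (0,e)"
  shows "(a,b,c) \<in> RR \<times> {(0,e)} \<times> RR \<union> (\<Union>i<N. Pair i ` BB \<times> Pair i ` BB \<times> Pair i ` BB)"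
proof (cases "b = (0,e)")
  case True
  then show ?thesis using a c D_r1 D_r2 by auto
next
  case False
  let ?V = "star_vertices N e" and ?A = "star_adj N E e"
  have aR: "a \<in> RR" and cR: "c \<in> RR" using a c D_r1 D_r2 by auto
  then obtain i u where au: "a = (i,u)" "i < N" "u \<in> SS" using R_eq by auto
  obtain j w where cw: "c = (j,w)" "j < N" "w \<in> SS" using cR R_eq by auto
  have bV: "b \<in> ?V" using ab by (simp add: dist_kgraph_def)
  then obtain l v where bv: "b = (l,v)" "l < N" "v \<noteq> e" using SV_cases[where e=e, OF N sym conn] False by blast
  have ue: "u \<noteq> e" using au ee k by auto
  have we: "w \<noteq> e" using cw ee k by auto
  have aV: "a \<in> ?V" and cV: "c \<in> ?V" using aR cR by auto
  have an: "a \<noteq> (0,e)" using au ue by simp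
  have cn: "c \<noteq> (0,e)" using cw we by simp
  have gs: "gdist ?V ?A x y = gdist ?V ?A y x" for x y
    using gdist_sym[where E="?A" and V="?V", OF SA_sym[where e=e, OF N sym conn]] by blast
  have rb: "gdist ?V ?A (0,e) b \<ge> 1" using dist_root_pos[where e=e, OF N sym conn bV False] .
  have il: "l = i"
  proof (rule ccontr)
    assume "l \<noteq> i"
    then have "gdist ?V ?A a (0,e) + gdist ?V ?A (0,e) b \<le> gdist ?V ?A a b"
      using sep[where e=e, OF N sym conn aV an bV False] au bv by simp
    moreover have "gdist ?V ?A a (0,e) = k" using aR gs by simp
    moreover have "gdist ?V ?A a b = k" using ab by (simp add: dist_kgraph_def)
    ultimately show False using rb by simp
  qed
  have jl: "j = l"
  proof (rule ccontr)
    assume "j \<noteq> l"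
    then have "gdist ?V ?A b (0,e) + gdist ?V ?A (0,e) c \<le> gdist ?V ?A b c"
      using sep[where e=e, OF N sym conn bV False cV cn] cw bv by simp
    moreover have "gdist ?V ?A (0,e) c = k" using cR by simp
    moreover have "gdist ?V ?A b c = k" using bc by (simp add: dist_kgraph_def)
    ultimately show False using rb gs by simp
  qed
  have uB: "u \<in> BB" using au gdist_sym[where V=UNIV and x=u and y=e, OF sym] by simp
  have wB: "w \<in> BB" using cw gdist_sym[where V=UNIV and x=w and y=e, OF sym] by simp
  have "gdist ?V ?A (0,e) b \<le> gdist ?V ?A (0,e) a + gdist ?V ?A a b"
  proof -
    obtain p where "is_walk ?V ?A p" "hd p = (0,e)" "last p = a" using star_conn[where e=e, OF N sym conn aV] by blast
    moreover obtain q where "is_walk ?V ?A q" "hd q = a" "last q = b" using star_conn2[where e=e, OF N sym conn aV bV] by blast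
    ultimately show ?thesis by (rule gdist_tri)
  qed
  then have "gdist ?V ?A (0,e) b \<le> 2 * k" using aR ab by (simp add: dist_kgraph_def)
  moreover have "gdist ?V ?A (0,e) b = gdist UNIV E e v"
    using dist_root[where e=e and v=v, OF N sym conn bv(2)] emb_ne[where e=e and i=l, OF N sym conn bv(3)] bv by simp
  ultimately have vB: "v \<in> BB" by simp
  show ?thesis using au bv cw il jl uB vB wB by blast
qed

lemma c4:
  assumes fin: "finite SS" and locfin: "\<And>x. finite {y. E x y}"
  shows "closed_walks (star_vertices N e) D (0,e) 4 \<le> card RR ^ 2 + N * card BB ^ 3"
proof -
  define T1 where "T1 = RR \<times> {(0::nat,e)} \<times> RR"
  define T2 where "T2 = (\<Union>i<N. Pair i ` BB \<times> Pair i ` BB \<times> Pair i ` BB)"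
  define f where "f = (\<lambda>(a::nat\<times>'a,b::nat\<times>'a,c::nat\<times>'a). [(0::nat,e), a, b, c, (0,e)])"
  define W where "W = {xs. is_walk (star_vertices N e) D xs \<and> length xs = Suc 4 \<and> hd xs = (0,e) \<and> last xs = (0,e)}"
  have finB: "finite BB" using ball_fin[OF conn locfin] by blast
  have finR: "finite RR" using R_eq fin by simp
  have sub: "W \<subseteq> f ` (T1 \<union> T2)"
  proof
    fix xs assume "xs \<in> W"
    then have xs: "is_walk (star_vertices N e) D xs" "length xs = 5" "hd xs = (0,e)" "last xs = (0,e)"
      unfolding W_def by auto
    then obtain a0 a b c c0 where abc: "xs = [a0,a,b,c,c0]" using len5 by blast
    then have "D (0,e) a" "D a b" "D b c" "D c (0,e)" using xs by auto
    from mem4[OF this] have "(a,b,c) \<in> T1 \<union> T2" unfolding T1_def T2_def .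
    moreover have "xs = f (a,b,c)" using abc xs unfolding f_def by simp
    ultimately show "xs \<in> f ` (T1 \<union> T2)" by blast
  qed
  have finT: "finite (T1 \<union> T2)" using finR finB unfolding T1_def T2_def by auto
  have "card W \<le> card (f ` (T1 \<union> T2))" using sub finT by (intro card_mono) auto
  also have "\<dots> \<le> card (T1 \<union> T2)" using card_image_le[OF finT] .
  also have "\<dots> \<le> card T1 + card T2" by (rule card_Un_le)
  also have "card T1 = card RR ^ 2"
    unfolding T1_def by (simp add: card_cartesian_product power2_eq_square)
  also have "card T2 \<le> (\<Sum>i<N. card (Pair i ` BB \<times> Pair i ` BB \<times> Pair i ` BB))"
    unfolding T2_def by (rule card_UN_le) simp
  also have "(\<Sum>i<N. card (Pair i ` BB \<times> Pair i ` BB \<times> Pair i ` BB)) = N * card BB ^ 3"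
  proof -
    have cb: "card (Pair i ` BB) = card BB" for i by (rule card_image) (simp add: inj_on_def)
    show ?thesis by (simp add: card_cartesian_product cb power3_eq_cube)
  qed
  finally show ?thesis unfolding closed_walks_def W_def by simp
qed

end


lemma abs_le_sq_bound: "(0::real) < \<eta> \<Longrightarrow> \<bar>y\<bar> \<le> \<eta> + y^2 / \<eta>"
proof (cases "\<bar>y\<bar> \<le> \<eta>")
  case True
  assume "0 < \<eta>"
  then have "0 \<le> y^2 / \<eta>" by simp
  then show ?thesis using True by linarith
next
  case False
  assume p: "0 < \<eta>"
  have "\<bar>y\<bar> * \<eta> \<le> \<bar>y\<bar> * \<bar>y\<bar>" using False p by (intro mult_left_mono) auto
  moreover have "\<bar>y\<bar> * \<bar>y\<bar> = y^2" by (simp add: power2_eq_square)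
  ultimately have "\<bar>y\<bar> * \<eta> \<le> y^2" by simp
  then have "\<bar>y\<bar> \<le> y^2 / \<eta>" using p by (simp add: pos_le_divide_eq)
  then show ?thesis using p by linarith
qed

lemma sqrt_bound:
  fixes a \<epsilon> :: real
  assumes "0 \<le> \<epsilon>" and H: "\<And>\<eta>. 0 < \<eta> \<Longrightarrow> a \<le> \<eta> + \<epsilon> / \<eta>"
  shows "a \<le> 2 * sqrt \<epsilon>"
proof (cases "\<epsilon> = 0")
  case True
  have "a \<le> \<eta>" if "0 < \<eta>" for \<eta> using H[OF that] True by simp
  then have "a \<le> 0"
  proof -
    assume h: "\<And>\<eta>. 0 < \<eta> \<Longrightarrow> a \<le> \<eta>"
    show "a \<le> 0"
    proof (rule ccontr)
      assume "\<not> a \<le> 0"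
      then have "a \<le> a / 2" using h[of "a/2"] by simp
      then show False using \<open>\<not> a \<le> 0\<close> by simp
    qed
  qed
  then show ?thesis using True by simp
next
  case False
  then have p: "0 < sqrt \<epsilon>" using assms(1) by simp
  have "\<epsilon> / sqrt \<epsilon> = sqrt \<epsilon>" using p assms(1) by (metis real_div_sqrt)
  then show ?thesis using H[OF p] by simp
qed

lemma sgn_bound: "\<bar>sgn t - t\<bar> \<le> \<bar>t^2 - (1::real)\<bar>"
proof -
  have e: "\<bar>t^2 - 1\<bar> = \<bar>t - 1\<bar> * \<bar>t + 1\<bar>" by (simp add: abs_mult[symmetric] power2_eq_square algebra_simps)
  consider "t > 0" | "t = 0" | "t < 0" by linarith
  then show ?thesis
  proof cases
    case 1
    have "\<bar>t - 1\<bar> * 1 \<le> \<bar>t - 1\<bar> * \<bar>t + 1\<bar>" using 1 by (intro mult_left_mono) auto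
    then show ?thesis using 1 e by (simp add: abs_minus_commute)
  next
    case 2 then show ?thesis by simp
  next
    case 3
    have "1 * \<bar>t + 1\<bar> \<le> \<bar>t - 1\<bar> * \<bar>t + 1\<bar>" using 3 by (intro mult_right_mono) auto
    then show ?thesis using 3 e by (simp add: abs_minus_commute add.commute)
  qed
qed

lemma tend_bound:
  fixes f g :: "nat \<Rightarrow> real"
  assumes "eventually (\<lambda>N. \<bar>f N - L\<bar> \<le> g N) sequentially" "g \<longlonglongrightarrow> 0"
  shows "f \<longlonglongrightarrow> L"
proof -
  have "(\<lambda>N. f N - L) \<longlonglongrightarrow> 0"
    by (rule Lim_null_comparison[OF _ assms(2)]) (use assms(1) in simp)
  then show ?thesis by (rule LIM_zero_cancel)
qed

context
  fixes M :: "real measure"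
  assumes rd: "real_distribution M"
    and int1: "integrable M (\<lambda>x. x)" and int2: "integrable M (\<lambda>x. x^2)"
    and int4: "integrable M (\<lambda>x. x^4)" and mean0: "(\<integral>x. x \<partial>M) = 0"
begin

lemma sp: "space M = UNIV"
proof -
  interpret real_distribution M by (rule rd)
  show ?thesis by (simp add: space_eq_univ)
qed

lemma sM: "A \<in> sets borel \<Longrightarrow> A \<in> sets M"
proof -
  interpret real_distribution M by (rule rd)
  show "A \<in> sets borel \<Longrightarrow> A \<in> sets M" by simp
qed

lemma intY: "integrable M (\<lambda>t. (t^2 - 1)^2)"
proof -
  interpret real_distribution M by (rule rd)
  have eq: "(\<lambda>t::real. (t^2 - 1)^2) = (\<lambda>t. t^4 - 2 * t^2 + 1)"
    by (intro ext) (simp add: power2_eq_square algebra_simps power4_eq_xxxx)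
  have a: "integrable M (\<lambda>t. 2 * t^2)" by (rule integrable_mult_right[OF int2])
  have b: "integrable M (\<lambda>t. t^4 - 2 * t^2)" using Bochner_Integration.integrable_diff[OF int4 a] .
  show ?thesis unfolding eq by (intro Bochner_Integration.integrable_add b) simp
qed

lemma setY: "{t. c \<le> (t^2 - 1)^2} \<in> sets M"
  by (rule sM) measurable

lemma markov: "0 < c \<Longrightarrow> measure M {t. c \<le> (t^2 - 1)^2} \<le> (\<integral>t. (t^2 - 1)^2 \<partial>M) / c"
proof -
  assume c: "0 < c"
  interpret real_distribution M by (rule rd)
  have "UNIV \<in> sets M" using sets.top[of M] sp by simp
  then show ?thesis using integral_Markov_inequality_measure[OF intY, of UNIV c] sp c by simp
qed

lemma low: assumes "x < -1"
  shows "cdf M x \<le> (\<integral>t. (t^2 - 1)^2 \<partial>M) / (x^2 - 1)^2"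
proof -
  interpret real_distribution M by (rule rd)
  have "1 < (-x)^2" using assms by (intro one_less_power) auto
  then have x2: "1 < x^2" by simp
  have "{..x} \<subseteq> {t. (x^2 - 1)^2 \<le> (t^2 - 1)^2}"
  proof
    fix t assume "t \<in> {..x}"
    then have "-x \<le> -t" by simp
    then have "(-x)^2 \<le> (-t)^2" using assms by (intro power_mono) auto
    then have "x^2 - 1 \<le> t^2 - 1" by simp
    then have "(x^2 - 1)^2 \<le> (t^2 - 1)^2" using x2 by (intro power_mono) auto
    then show "t \<in> {t. (x^2 - 1)^2 \<le> (t^2 - 1)^2}" by simp
  qed
  then have "cdf M x \<le> measure M {t. (x^2 - 1)^2 \<le> (t^2 - 1)^2}"
    unfolding cdf_def using setY by (intro finite_measure_mono) auto
  also have "\<dots> \<le> (\<integral>t. (t^2 - 1)^2 \<partial>M) / (x^2 - 1)^2" using x2 by (intro markov) simp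
  finally show ?thesis .
qed

lemma high: assumes "1 < x"
  shows "\<bar>cdf M x - 1\<bar> \<le> (\<integral>t. (t^2 - 1)^2 \<partial>M) / (x^2 - 1)^2"
proof -
  interpret real_distribution M by (rule rd)
  have x2: "1 < x^2" using assms by (simp add: one_less_power)
  have "{x<..} \<subseteq> {t. (x^2 - 1)^2 \<le> (t^2 - 1)^2}"
  proof
    fix t assume "t \<in> {x<..}"
    then have "x^2 \<le> t^2" using assms by (intro power_mono) auto
    then have "x^2 - 1 \<le> t^2 - 1" by simp
    then have "(x^2 - 1)^2 \<le> (t^2 - 1)^2" using x2 by (intro power_mono) auto
    then show "t \<in> {t. (x^2 - 1)^2 \<le> (t^2 - 1)^2}" by simp
  qed
  then have "measure M {x<..} \<le> measure M {t. (x^2 - 1)^2 \<le> (t^2 - 1)^2}"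
    using setY by (intro finite_measure_mono) auto
  also have "\<dots> \<le> (\<integral>t. (t^2 - 1)^2 \<partial>M) / (x^2 - 1)^2" using x2 by (intro markov) simp
  finally have a: "measure M {x<..} \<le> (\<integral>t. (t^2 - 1)^2 \<partial>M) / (x^2 - 1)^2" .
  have "measure M {x<..} = 1 - cdf M x"
  proof -
    have "{x<..} = space M - {..x}" using sp by auto
    then show ?thesis unfolding cdf_def using finite_measure_compl[of "{..x}"] prob_space sM by auto
  qed
  moreover have "cdf M x \<le> 1" by (rule cdf_bounded_prob)
  ultimately show ?thesis using a by simp
qed

lemma mid: assumes "-1 < x" "x < 1"
  shows "\<bar>cdf M x - measure M {..<0}\<bar> \<le> (\<integral>t. (t^2 - 1)^2 \<partial>M) / (1 - x^2)^2"
proof -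
  interpret real_distribution M by (rule rd)
  let ?U = "{t. (1 - x^2)^2 \<le> (t^2 - 1)^2}"
  have x2: "x^2 < 1" using assms by (simp add: abs_square_less_1)
  have key: "t \<notin> ?U \<Longrightarrow> (t \<le> x \<longleftrightarrow> t < 0)" for t
  proof -
    assume nU: "t \<notin> ?U"
    have c: "(1 - x^2)^2 \<le> (t^2 - 1)^2" if "t^2 \<le> x^2"
    proof -
      have "(1 - x^2)^2 \<le> (1 - t^2)^2" using that x2 by (intro power_mono) auto
      then show ?thesis by (simp add: power2_commute)
    qed
    show ?thesis
    proof
      assume "t \<le> x"
      show "t < 0"
      proof (rule ccontr)
        assume "\<not> t < 0"
        then have "t^2 \<le> x^2" using \<open>t \<le> x\<close> by (intro power_mono) auto
        then show False using c nU by simp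
      qed
    next
      assume "t < 0"
      show "t \<le> x"
      proof (rule ccontr)
        assume "\<not> t \<le> x"
        then have "(-t)^2 \<le> (-x)^2" using \<open>t < 0\<close> by (intro power_mono) auto
        then have "t^2 \<le> x^2" by simp
        then show False using c nU by simp
      qed
    qed
  qed
  have Us: "?U \<in> sets M" by (rule setY)
  have s1: "{..x} \<in> sets M" "{..<0::real} \<in> sets M" by (auto intro: sM)
  have "{..x} \<subseteq> {..<0} \<union> ?U" using key by auto
  then have "measure M {..x} \<le> measure M ({..<0} \<union> ?U)" using Us s1 by (intro finite_measure_mono) auto
  also have "\<dots> \<le> measure M {..<0} + measure M ?U" using Us s1 by (intro measure_Un_le) auto
  finally have i1: "measure M {..x} \<le> measure M {..<0} + measure M ?U" .
  have "{..<0} \<subseteq> {..x} \<union> ?U" using key by auto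
  then have "measure M {..<0} \<le> measure M ({..x} \<union> ?U)" using Us s1 by (intro finite_measure_mono) auto
  also have "\<dots> \<le> measure M {..x} + measure M ?U" using Us s1 by (intro measure_Un_le) auto
  finally have i2: "measure M {..<0} \<le> measure M {..x} + measure M ?U" .
  have "measure M ?U \<le> (\<integral>t. (t^2 - 1)^2 \<partial>M) / (1 - x^2)^2" using x2 by (intro markov) simp
  then show ?thesis using i1 i2 unfolding cdf_def by linarith
qed

lemma half:
  "\<bar>measure M {..<0} - 1/2\<bar> \<le> ((\<integral>t. (t^2 - 1)^2 \<partial>M) + 2 * sqrt (\<integral>t. (t^2 - 1)^2 \<partial>M)) / 2"
proof -
  interpret real_distribution M by (rule rd)
  define \<epsilon> where "\<epsilon> = (\<integral>t. (t^2 - 1)^2 \<partial>M)"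
  have e0: "0 \<le> \<epsilon>" unfolding \<epsilon>_def by (rule integral_nonneg_AE) simp
  have "{0::real} \<subseteq> {t. 1 \<le> (t^2 - 1)^2}" by simp
  then have "measure M {0} \<le> measure M {t. 1 \<le> (t^2 - 1)^2}" using setY by (intro finite_measure_mono) auto
  also have "\<dots> \<le> \<epsilon>" unfolding \<epsilon>_def using markov[of 1] by simp
  finally have m0: "measure M {0} \<le> \<epsilon>" .
  have s: "{..<0::real} \<in> sets M" "{0::real} \<in> sets M" "{0::real<..} \<in> sets M" by (auto intro: sM)
  have "measure M ({..<0} \<union> {0} \<union> {0<..}) = measure M ({..<0} \<union> {0}) + measure M {0<..}"
    using s by (intro finite_measure_Union) auto
  also have "measure M ({..<0} \<union> {0}) = measure M {..<0} + measure M {0}"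
    using s by (intro finite_measure_Union) auto
  also have "{..<0} \<union> {0} \<union> {0<..} = space M" using sp by auto
  finally have part: "measure M {..<0} + measure M {0} + measure M {0<..} = 1" using prob_space by simp
  have sg: "sgn = (\<lambda>t::real. indicator {0<..} t - indicator {..<0} t)"
    by (intro ext) (auto simp: indicator_def sgn_if)
  have ii: "integrable M (indicat_real A)" if "A \<in> sets M" for A
    using that emeasure_finite[of A] by (intro integrable_real_indicator) (auto simp: less_top[symmetric])
  have isg: "integrable M (sgn :: real \<Rightarrow> real)" unfolding sg
    using Bochner_Integration.integrable_diff[OF ii[OF s(3)] ii[OF s(1)]] .
  have "(\<integral>t. sgn t \<partial>M) = measure M {0<..} - measure M {..<0}"
    unfolding sg using s sp ii by (subst Bochner_Integration.integral_diff) auto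
  moreover have "(\<integral>t. sgn t - t \<partial>M) = (\<integral>t. sgn t \<partial>M)"
    using isg int1 mean0 by (subst Bochner_Integration.integral_diff) auto
  moreover have "\<bar>\<integral>t. sgn t - t \<partial>M\<bar> \<le> 2 * sqrt \<epsilon>"
  proof -
    have iA: "integrable M (\<lambda>t. \<bar>t^2 - 1\<bar>)" using int2 by (intro integrable_abs Bochner_Integration.integrable_diff) auto
    have "\<bar>\<integral>t. sgn t - t \<partial>M\<bar> \<le> (\<integral>t. \<bar>t^2 - 1\<bar> \<partial>M)"
      using isg int1 iA sgn_bound by (intro integral_abs_bound_integral) auto
    also have "\<dots> \<le> 2 * sqrt \<epsilon>"
    proof (rule sqrt_bound[OF e0])
      fix \<eta> :: real assume p: "0 < \<eta>"
      have "(\<integral>t. \<bar>t^2 - 1\<bar> \<partial>M) \<le> (\<integral>t. \<eta> + (t^2 - 1)^2 / \<eta> \<partial>M)"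
        using iA intY abs_le_sq_bound[OF p] by (intro integral_mono) auto
      also have "\<dots> = \<eta> + \<epsilon> / \<eta>" unfolding \<epsilon>_def using intY prob_space
        by (subst Bochner_Integration.integral_add) auto
      finally show "(\<integral>t. \<bar>t^2 - 1\<bar> \<partial>M) \<le> \<eta> + \<epsilon> / \<eta>" .
    qed
    finally show ?thesis .
  qed
  ultimately have "\<bar>measure M {0<..} - measure M {..<0}\<bar> \<le> 2 * sqrt \<epsilon>" by simp
  then have "measure M {0<..} - measure M {..<0} \<le> 2 * sqrt \<epsilon>" "-(2 * sqrt \<epsilon>) \<le> measure M {0<..} - measure M {..<0}"
    by (simp_all add: abs_le_iff)
  then show ?thesis using part m0 e0 measure_nonneg[of M "{0}"] unfolding \<epsilon>_def[symmetric] abs_le_iff by (intro conjI; argo)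
qed

lemma eps_eq: "(\<integral>t. (t^2 - 1)^2 \<partial>M) = (\<integral>t. t^4 \<partial>M) - 2 * (\<integral>t. t^2 \<partial>M) + 1"
proof -
  interpret real_distribution M by (rule rd)
  have eq: "(\<lambda>t::real. (t^2 - 1)^2) = (\<lambda>t. t^4 - 2 * t^2 + 1)"
    by (intro ext) (simp add: power2_eq_square algebra_simps power4_eq_xxxx)
  have a: "integrable M (\<lambda>t. 2 * t^2)" by (rule integrable_mult_right[OF int2])
  have b: "integrable M (\<lambda>t. t^4 - 2 * t^2)" using Bochner_Integration.integrable_diff[OF int4 a] .
  have "(\<integral>t. t^4 - 2 * t^2 + 1 \<partial>M) = (\<integral>t. t^4 - 2 * t^2 \<partial>M) + 1"
    using b prob_space by (subst Bochner_Integration.integral_add) auto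
  also have "(\<integral>t. t^4 - 2 * t^2 \<partial>M) = (\<integral>t. t^4 \<partial>M) - (\<integral>t. 2 * t^2 \<partial>M)"
    using int4 a by (rule Bochner_Integration.integral_diff)
  also have "(\<integral>t. 2 * t^2 \<partial>M) = 2 * (\<integral>t. t^2 \<partial>M)" by simp
  finally show ?thesis unfolding eq .
qed

lemma eps_nonneg: "0 \<le> (\<integral>t. (t^2 - 1)^2 \<partial>M)"
  by (rule integral_nonneg_AE) simp

end


lemma nu_rd: "real_distribution centered_bernoulli"
  unfolding centered_bernoulli_def real_distribution_def real_distribution_axioms_def
  by (auto intro!: prob_space.prob_space_distr prob_space_measure_pmf)

lemma nu_measure: "A \<in> sets borel \<Longrightarrow> measure centered_bernoulli A = card ({-1, 1} \<inter> A) / 2"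
proof -
  assume A: "A \<in> sets borel"
  have "measure centered_bernoulli A = measure (measure_pmf (pmf_of_set {-1::real, 1})) A"
    unfolding centered_bernoulli_def using A by (subst measure_distr) auto
  also have "\<dots> = card ({-1, 1} \<inter> A) / card {-1::real, 1}" by (rule measure_pmf_of_set) auto
  finally show ?thesis by simp
qed

lemma nu_cdf:
  "cdf centered_bernoulli x = (if x < -1 then 0 else if x < 1 then 1/2 else 1)"
proof -
  have "cdf centered_bernoulli x = card ({-1, 1} \<inter> {..x}) / 2" unfolding cdf_def by (rule nu_measure) simp
  moreover have "{-1, 1} \<inter> {..x} = (if x < -1 then {} else if x < 1 then {-1} else {-1, 1::real})" by auto
  ultimately show ?thesis by (cases "x < -1"; cases "x < 1"; simp)
qed

lemma nu_cont: "isCont (cdf centered_bernoulli) x \<Longrightarrow> x \<noteq> -1 \<and> x \<noteq> 1"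
proof -
  assume c: "isCont (cdf centered_bernoulli) x"
  interpret real_distribution centered_bernoulli by (rule nu_rd)
  from c have "measure centered_bernoulli {x} = 0" using isCont_cdf by blast
  then have "card ({-1, 1} \<inter> {x}) = (0::nat)" using nu_measure[of "{x}"] by simp
  then show ?thesis by auto
qed

theorem theorem1p2:
  fixes E :: "'a \<Rightarrow> 'a \<Rightarrow> bool" and e :: 'a and k :: nat
    and \<mu> :: "nat \<Rightarrow> real measure"
  assumes sym: "\<And>x y. E x y \<Longrightarrow> E y x"
    and irrefl: "\<And>x. \<not> E x x"
    and locfin: "\<And>x. finite {y. E x y}"
    and conn: "\<And>x y. E\<^sup>*\<^sup>* x y"
    and k: "k \<ge> 1"
    and sigma: "card {x. gdist UNIV E x e = k} \<ge> 1"
    and distr: "\<And>N. N \<ge> 1 \<Longrightarrow> real_distribution (\<mu> N)"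
    and moments: "\<And>N m. N \<ge> 1 \<Longrightarrow>
        integrable (\<mu> N) (\<lambda>x. x ^ m) \<and>
        (\<integral>x. x ^ m \<partial>\<mu> N) =
          (1 / sqrt (real N * real (card {x. gdist UNIV E x e = k}))) ^ m *
          real (closed_walks (star_vertices N e)
                  (dist_kgraph (star_vertices N e) (star_adj N E e) k) (0, e) m)"
  shows "weak_conv_m \<mu> centered_bernoulli"
proof -
  define \<sigma> where "\<sigma> = card {x. gdist UNIV E x e = k}"
  define B where "B = card {w. gdist UNIV E e w \<le> 2 * k} ^ 3"
  define \<epsilon> where "\<epsilon> N = (\<integral>t. (t^2 - 1)^2 \<partial>\<mu> N)" for N
  have finS: "finite {x. gdist UNIV E x e = k}" using sigma by (intro card_ge_0_finite) simp
  have sig1: "1 \<le> \<sigma>" using sigma \<sigma>_def by simp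
  have facts: "real_distribution (\<mu> N) \<and> integrable (\<mu> N) (\<lambda>x. x) \<and> integrable (\<mu> N) (\<lambda>x. x^2)
     \<and> integrable (\<mu> N) (\<lambda>x. x^4) \<and> (\<integral>x. x \<partial>\<mu> N) = 0 \<and> 0 \<le> \<epsilon> N \<and> \<epsilon> N \<le> real B / real N"
    if N: "N \<ge> 1" for N
  proof -
    have rd: "real_distribution (\<mu> N)" using distr[OF N] .
    have i1: "integrable (\<mu> N) (\<lambda>x. x)" using moments[OF N, of 1] by simp
    have i2: "integrable (\<mu> N) (\<lambda>x. x^2)" using moments[OF N, of 2] by simp
    have i4: "integrable (\<mu> N) (\<lambda>x. x^4)" using moments[OF N, of 4] by simp
    have m1: "(\<integral>x. x \<partial>\<mu> N) = 0"
      using moments[OF N, of 1] c1[where e=e, OF N sym conn k] by simp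
    have cR: "card {x \<in> star_vertices N e. gdist (star_vertices N e) (star_adj N E e) (0,e) x = k} = N * \<sigma>"
      by (simp only: R_eq[where e=e, OF N sym conn k]) (simp add: card_cartesian_product \<sigma>_def)
    have pos: "0 < real N * real \<sigma>" using N sig1 by simp
    have sq: "(1 / sqrt (real N * real \<sigma>))^2 = 1 / (real N * real \<sigma>)"
      using pos by (simp add: power_divide)
    have sq4: "(1 / sqrt (real N * real \<sigma>))^4 = 1 / (real N * real \<sigma>)^2"
    proof -
      have "(1 / sqrt (real N * real \<sigma>))^4 = ((1 / sqrt (real N * real \<sigma>))^2)^2" by simp
      then show ?thesis using sq by (simp add: power_divide)
    qed
    have m2: "(\<integral>x. x^2 \<partial>\<mu> N) = 1"
      using moments[OF N, of 2] c2[where e=e, OF N sym conn k] cR sq pos N sig1 unfolding \<sigma>_def[symmetric] by simp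
    have c4b: "real (closed_walks (star_vertices N e) (dist_kgraph (star_vertices N e) (star_adj N E e) k) (0, e) 4)
        \<le> (real N * real \<sigma>)^2 + real N * real B"
    proof -
      have "closed_walks (star_vertices N e) (dist_kgraph (star_vertices N e) (star_adj N E e) k) (0, e) 4
         \<le> (N * \<sigma>) ^ 2 + N * B"
        using c4[where e=e, OF N sym conn k finS locfin] cR unfolding B_def by simp
      then show ?thesis by (metis of_nat_add of_nat_le_iff of_nat_mult of_nat_power)
    qed
    have m4: "(\<integral>x. x^4 \<partial>\<mu> N) \<le> 1 + real B / real N"
    proof -
      have "(\<integral>x. x^4 \<partial>\<mu> N) = 1 / (real N * real \<sigma>)^2 *
          real (closed_walks (star_vertices N e) (dist_kgraph (star_vertices N e) (star_adj N E e) k) (0, e) 4)"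
        using moments[OF N, of 4] sq4 unfolding \<sigma>_def[symmetric] by simp
      also have "\<dots> \<le> 1 / (real N * real \<sigma>)^2 * ((real N * real \<sigma>)^2 + real N * real B)"
        using c4b by (intro mult_left_mono) auto
      also have "\<dots> = 1 + real B / (real N * real \<sigma>^2)"
      proof -
        have "0 < real N" "0 < real \<sigma>" using N sig1 by auto
        then show ?thesis by (simp add: field_simps power2_eq_square)
      qed
      also have "\<dots> \<le> 1 + real B / real N"
      proof -
        have "real N \<le> real N * real \<sigma>^2" using sig1 N by (simp add: one_le_power)
        moreover have "0 < real N * real \<sigma>^2" "0 < real N" using N sig1 by auto
        ultimately have "real B / (real N * real \<sigma>^2) \<le> real B / real N"
          by (intro divide_left_mono) auto
        then show ?thesis by simp
      qed
      finally show ?thesis .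
    qed
    have "\<epsilon> N = (\<integral>x. x^4 \<partial>\<mu> N) - 2 * (\<integral>x. x^2 \<partial>\<mu> N) + 1"
      unfolding \<epsilon>_def by (rule eps_eq[OF rd i1 i2 i4 m1])
    then have "\<epsilon> N \<le> real B / real N" using m2 m4 by simp
    moreover have "0 \<le> \<epsilon> N" unfolding \<epsilon>_def by (rule eps_nonneg[OF rd i1 i2 i4 m1])
    ultimately show ?thesis using rd i1 i2 i4 m1 by simp
  qed
  have ev: "eventually (\<lambda>N. N \<ge> (1::nat)) sequentially" by (rule eventually_ge_at_top)
  have eps0: "\<epsilon> \<longlonglongrightarrow> 0"
  proof (rule tend_bound)
    show "eventually (\<lambda>N. \<bar>\<epsilon> N - 0\<bar> \<le> real B / real N) sequentially"
      using ev by eventually_elim (use facts in auto)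
    show "(\<lambda>N. real B / real N) \<longlonglongrightarrow> 0" by (rule lim_const_over_n)
  qed
  have sqe: "(\<lambda>N. sqrt (\<epsilon> N)) \<longlonglongrightarrow> 0" using tendsto_real_sqrt[OF eps0] by simp
  show ?thesis unfolding weak_conv_m_def weak_conv_def
  proof (intro allI impI)
    fix x assume "isCont (cdf centered_bernoulli) x"
    then have x: "x \<noteq> -1" "x \<noteq> 1" using nu_cont by auto
    consider "x < -1" | "-1 < x \<and> x < 1" | "1 < x" using x by linarith
    then show "(\<lambda>n. cdf (\<mu> n) x) \<longlonglongrightarrow> cdf centered_bernoulli x"
    proof cases
      case 1
      have "(\<lambda>n. cdf (\<mu> n) x) \<longlonglongrightarrow> 0"
      proof (rule tend_bound)
        show "eventually (\<lambda>N. \<bar>cdf (\<mu> N) x - 0\<bar> \<le> \<epsilon> N / (x^2 - 1)^2) sequentially"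
          using ev
        proof eventually_elim
          case (elim N)
          then have f: "real_distribution (\<mu> N)" "integrable (\<mu> N) (\<lambda>x. x)" "integrable (\<mu> N) (\<lambda>x. x^2)"
            "integrable (\<mu> N) (\<lambda>x. x^4)" "(\<integral>x. x \<partial>\<mu> N) = 0" using facts by auto
          have "cdf (\<mu> N) x \<le> \<epsilon> N / (x^2 - 1)^2" unfolding \<epsilon>_def by (rule low[OF f 1])
          moreover have "0 \<le> cdf (\<mu> N) x" unfolding cdf_def by (rule measure_nonneg)
          ultimately show ?case by simp
        qed
        show "(\<lambda>N. \<epsilon> N / (x^2 - 1)^2) \<longlonglongrightarrow> 0" using tendsto_divide_zero[OF eps0] by simp
      qed
      then show ?thesis using 1 by (simp add: nu_cdf)
    next
      case 2
      have "(\<lambda>n. cdf (\<mu> n) x) \<longlonglongrightarrow> 1/2"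
      proof (rule tend_bound)
        show "eventually (\<lambda>N. \<bar>cdf (\<mu> N) x - 1/2\<bar> \<le> \<epsilon> N / (1 - x^2)^2 + (\<epsilon> N + 2 * sqrt (\<epsilon> N)) / 2) sequentially"
          using ev
        proof eventually_elim
          case (elim N)
          then have f: "real_distribution (\<mu> N)" "integrable (\<mu> N) (\<lambda>x. x)" "integrable (\<mu> N) (\<lambda>x. x^2)"
            "integrable (\<mu> N) (\<lambda>x. x^4)" "(\<integral>x. x \<partial>\<mu> N) = 0" using facts by auto
          have a: "\<bar>cdf (\<mu> N) x - measure (\<mu> N) {..<0}\<bar> \<le> \<epsilon> N / (1 - x^2)^2"
            unfolding \<epsilon>_def using 2 by (intro mid[OF f]) auto
          have b: "\<bar>measure (\<mu> N) {..<0} - 1/2\<bar> \<le> (\<epsilon> N + 2 * sqrt (\<epsilon> N)) / 2"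
            unfolding \<epsilon>_def by (rule half[OF f])
          show ?case using a b by linarith
        qed
        have "(\<lambda>N. \<epsilon> N / (1 - x^2)^2 + (\<epsilon> N + 2 * sqrt (\<epsilon> N)) / 2) \<longlonglongrightarrow> 0 / (1 - x^2)^2 + (0 + 2 * 0) / 2"
        proof -
          have "x^2 < 1" using 2 by (simp add: abs_square_less_1 abs_less_iff)
          then show ?thesis by (intro tendsto_intros eps0 sqe) auto
        qed
        then show "(\<lambda>N. \<epsilon> N / (1 - x^2)^2 + (\<epsilon> N + 2 * sqrt (\<epsilon> N)) / 2) \<longlonglongrightarrow> 0" by simp
      qed
      then show ?thesis using 2 by (simp add: nu_cdf)
    next
      case 3
      have "(\<lambda>n. cdf (\<mu> n) x) \<longlonglongrightarrow> 1"
      proof (rule tend_bound)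
        show "eventually (\<lambda>N. \<bar>cdf (\<mu> N) x - 1\<bar> \<le> \<epsilon> N / (x^2 - 1)^2) sequentially"
          using ev
        proof eventually_elim
          case (elim N)
          then have f: "real_distribution (\<mu> N)" "integrable (\<mu> N) (\<lambda>x. x)" "integrable (\<mu> N) (\<lambda>x. x^2)"
            "integrable (\<mu> N) (\<lambda>x. x^4)" "(\<integral>x. x \<partial>\<mu> N) = 0" using facts by auto
          show ?case unfolding \<epsilon>_def by (rule high[OF f 3])
        qed
        show "(\<lambda>N. \<epsilon> N / (x^2 - 1)^2) \<longlonglongrightarrow> 0" using tendsto_divide_zero[OF eps0] by simp
      qed
      then show ?thesis using 3 by (simp add: nu_cdf)
    qed
  qed
qed


end
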